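(* Let $G$ be a finite perfect group (i.e. $G=[G,G]$) and let $I$ be any set. Then the unrestricted direct product $G^I$, viewed as a discrete group, is strongly bounded.
   Context: A group $\Gamma$ is called strongly bounded if for every action of $\Gamma$ by isometries on a metric space, every orbit is bounded. *)

theory Defs
  imports "HOL-Analysis.Analysis" "HOL-Algebra.Product_Groups" "HOL-Algebra.Solvable_Groups"
begin

definition perfect_group :: "('a, 'b) monoid_scheme \<Rightarrow> bool" where
  "perfect_group G \<longleftrightarrow> group G \<and> derived G (carrier G) = carrier G"

definition isometric_action ::
  "('g, 'b) monoid_scheme \<Rightarrow> 'm set \<Rightarrow> ('m \<Rightarrow> 'm \<Rightarrow> real) \<Rightarrow> ('g \<Rightarrow> 'm \<Rightarrow> 'm) \<Rightarrow> bool" where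
  "isometric_action \<Gamma> M d \<phi> \<longleftrightarrow>
     Metric_space M d \<and>
     (\<forall>g\<in>carrier \<Gamma>. \<forall>x\<in>M. \<phi> g x \<in> M) \<and>
     (\<forall>g\<in>carrier \<Gamma>. \<forall>x\<in>M. \<forall>y\<in>M. d (\<phi> g x) (\<phi> g y) = d x y) \<and>
     (\<forall>x\<in>M. \<phi> \<one>\<^bsub>\<Gamma>\<^esub> x = x) \<and>
     (\<forall>g\<in>carrier \<Gamma>. \<forall>h\<in>carrier \<Gamma>. \<forall>x\<in>M. \<phi> (g \<otimes>\<^bsub>\<Gamma>\<^esub> h) x = \<phi> g (\<phi> h x))"

text \<open>The type 'm is an explicit parameter;
  universally quantifying it at theorem level covers all metric spaces.\<close>
definition strongly_bounded :: "'m itself \<Rightarrow> ('g, 'b) monoid_scheme \<Rightarrow> bool" where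
  "strongly_bounded (TYPE('m)) \<Gamma> \<longleftrightarrow>
     (\<forall>(M :: 'm set) d \<phi>. isometric_action \<Gamma> M d \<phi> \<longrightarrow>
        (\<forall>x\<in>M. Metric_space.mbounded M d ((\<lambda>g. \<phi> g x) ` carrier \<Gamma>)))"

end

theory Submission
  imports Defs "HOL-Library.Nat_Bijection"
begin

locale ctx =
  fixes G :: "('a, 'b) monoid_scheme" and I :: "'i set" and M :: "'m set"
    and d :: "'m \<Rightarrow> 'm \<Rightarrow> real" and \<phi> :: "('i \<Rightarrow> 'a) \<Rightarrow> 'm \<Rightarrow> 'm" and x :: 'm
  assumes grp: "group G" and fin: "finite (carrier G)"
    and perf: "derived G (carrier G) = carrier G"
    and act: "isometric_action (product_group I (\<lambda>_. G)) M d \<phi>" and xM: "x \<in> M"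
begin

interpretation G: group G by (rule grp)
interpretation Met: Metric_space M d using act by (simp add: isometric_action_def)

abbreviation "P \<equiv> product_group I (\<lambda>_. G)"

definition ell where "ell g = d (\<phi> g x) x"
definition e where "e a X = (\<lambda>i\<in>I. if i \<in> X then a else \<one>\<^bsub>G\<^esub>)"
definition f where "f X = (\<Sum>a\<in>carrier G. ell (e a X))"

lemma act_in: "g \<in> carrier P \<Longrightarrow> y \<in> M \<Longrightarrow> \<phi> g y \<in> M"
  using act by (simp add: isometric_action_def)
lemma act_iso: "g \<in> carrier P \<Longrightarrow> y \<in> M \<Longrightarrow> z \<in> M \<Longrightarrow> d (\<phi> g y) (\<phi> g z) = d y z"
  using act unfolding isometric_action_def by blast
lemma act_one: "y \<in> M \<Longrightarrow> \<phi> \<one>\<^bsub>P\<^esub> y = y"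
  using act unfolding isometric_action_def by blast
lemma act_mult: "g \<in> carrier P \<Longrightarrow> h \<in> carrier P \<Longrightarrow> y \<in> M \<Longrightarrow> \<phi> (g \<otimes>\<^bsub>P\<^esub> h) y = \<phi> g (\<phi> h y)"
  using act unfolding isometric_action_def by blast

lemma ell_nonneg: "0 \<le> ell g" by (simp add: ell_def)

lemma ell_one: "ell \<one>\<^bsub>P\<^esub> = 0"
  unfolding ell_def using act_one[OF xM] xM by simp

lemma ell_mult: assumes "g \<in> carrier P" "h \<in> carrier P"
  shows "ell (g \<otimes>\<^bsub>P\<^esub> h) \<le> ell g + ell h"
proof -
  have "ell (g \<otimes>\<^bsub>P\<^esub> h) = d (\<phi> g (\<phi> h x)) x" unfolding ell_def using act_mult assms xM by simp
  also have "\<dots> \<le> d (\<phi> g (\<phi> h x)) (\<phi> g x) + d (\<phi> g x) x"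
    by (rule Met.triangle) (use act_in assms xM in auto)
  also have "d (\<phi> g (\<phi> h x)) (\<phi> g x) = ell h"
    unfolding ell_def using act_iso assms xM act_in by simp
  finally show ?thesis unfolding ell_def[of g] by linarith
qed

lemma e_carrier: "a \<in> carrier G \<Longrightarrow> e a X \<in> carrier P"
  by (auto simp: e_def)

lemma e_one: "e \<one>\<^bsub>G\<^esub> X = \<one>\<^bsub>P\<^esub>"
  by (auto simp: e_def)

declare mult_product_group[simp del] one_product_group[simp del] carrier_product_group[simp del]

lemma e_mult: "a \<in> carrier G \<Longrightarrow> b \<in> carrier G \<Longrightarrow> e (a \<otimes>\<^bsub>G\<^esub> b) X = e a X \<otimes>\<^bsub>P\<^esub> e b X"
  unfolding e_def mult_product_group by (intro restrict_ext) auto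

lemma e_union: "A \<inter> B = {} \<Longrightarrow> a \<in> carrier G \<Longrightarrow> e a (A \<union> B) = e a A \<otimes>\<^bsub>P\<^esub> e a B"
  unfolding e_def mult_product_group by (intro restrict_ext) auto

lemma e_diff: "Z \<subseteq> R \<Longrightarrow> a \<in> carrier G \<Longrightarrow> e a Z = e a R \<otimes>\<^bsub>P\<^esub> e (inv\<^bsub>G\<^esub> a) (R - Z)"
  unfolding e_def mult_product_group by (intro restrict_ext) auto

lemma e_comm: "a \<in> carrier G \<Longrightarrow> b \<in> carrier G \<Longrightarrow>
  e (a \<otimes>\<^bsub>G\<^esub> b \<otimes>\<^bsub>G\<^esub> inv\<^bsub>G\<^esub> a \<otimes>\<^bsub>G\<^esub> inv\<^bsub>G\<^esub> b) (X \<inter> Y)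
   = e a X \<otimes>\<^bsub>P\<^esub> e b Y \<otimes>\<^bsub>P\<^esub> e (inv\<^bsub>G\<^esub> a) X \<otimes>\<^bsub>P\<^esub> e (inv\<^bsub>G\<^esub> b) Y"
  unfolding e_def mult_product_group by (intro restrict_ext) (auto simp: G.m_assoc)

lemma f_nonneg: "0 \<le> f X"
  unfolding f_def by (rule sum_nonneg) (simp add: ell_nonneg)

lemma ell_le_f: "a \<in> carrier G \<Longrightarrow> ell (e a X) \<le> f X"
  unfolding f_def by (rule member_le_sum) (auto simp: ell_nonneg fin)

lemma f_union: assumes "A \<inter> B = {}" shows "f (A \<union> B) \<le> f A + f B"
proof -
  have "f (A \<union> B) \<le> (\<Sum>a\<in>carrier G. ell (e a A) + ell (e a B))"
    unfolding f_def by (rule sum_mono) (simp add: e_union[OF assms] ell_mult e_carrier)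
  thus ?thesis by (simp add: sum.distrib f_def)
qed

lemma f_diff: assumes "Z \<subseteq> R" shows "f Z \<le> f R + real (card (carrier G)) * f (R - Z)"
proof -
  have "f Z \<le> (\<Sum>a\<in>carrier G. ell (e a R) + f (R - Z))"
    unfolding f_def[of Z]
  proof (rule sum_mono)
    fix a assume a: "a \<in> carrier G"
    have "ell (e a Z) \<le> ell (e a R) + ell (e (inv\<^bsub>G\<^esub> a) (R - Z))"
      using e_diff[OF assms a] ell_mult e_carrier a by simp
    also have "ell (e (inv\<^bsub>G\<^esub> a) (R - Z)) \<le> f (R - Z)" using a by (simp add: ell_le_f)
    finally show "ell (e a Z) \<le> ell (e a R) + f (R - Z)" by simp
  qed
  thus ?thesis by (simp add: sum.distrib f_def)
qed

lemma ell_comm: assumes a: "a \<in> carrier G" and b: "b \<in> carrier G"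
  shows "ell (e (a \<otimes>\<^bsub>G\<^esub> b \<otimes>\<^bsub>G\<^esub> inv\<^bsub>G\<^esub> a \<otimes>\<^bsub>G\<^esub> inv\<^bsub>G\<^esub> b) (X \<inter> Y)) \<le> 2 * (f X + f Y)"
proof -
  have c: "e a X \<in> carrier P" "e b Y \<in> carrier P" "e (inv\<^bsub>G\<^esub> a) X \<in> carrier P" "e (inv\<^bsub>G\<^esub> b) Y \<in> carrier P"
    using a b by (auto intro: e_carrier)
  interpret PG: group P by (rule product_group) (rule grp)
  have "ell (e (a \<otimes>\<^bsub>G\<^esub> b \<otimes>\<^bsub>G\<^esub> inv\<^bsub>G\<^esub> a \<otimes>\<^bsub>G\<^esub> inv\<^bsub>G\<^esub> b) (X \<inter> Y))
     \<le> ell (e a X \<otimes>\<^bsub>P\<^esub> e b Y \<otimes>\<^bsub>P\<^esub> e (inv\<^bsub>G\<^esub> a) X) + ell (e (inv\<^bsub>G\<^esub> b) Y)"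
    unfolding e_comm[OF a b] using c by (intro ell_mult) auto
  also have "ell (e a X \<otimes>\<^bsub>P\<^esub> e b Y \<otimes>\<^bsub>P\<^esub> e (inv\<^bsub>G\<^esub> a) X) \<le> ell (e a X \<otimes>\<^bsub>P\<^esub> e b Y) + ell (e (inv\<^bsub>G\<^esub> a) X)"
    using c by (intro ell_mult) auto
  also have "ell (e a X \<otimes>\<^bsub>P\<^esub> e b Y) \<le> ell (e a X) + ell (e b Y)"
    using c by (intro ell_mult) auto
  finally show ?thesis using ell_le_f[OF a, of X] ell_le_f[OF b, of Y]
     ell_le_f[of "inv\<^bsub>G\<^esub> a" X] ell_le_f[of "inv\<^bsub>G\<^esub> b" Y] a b by simp
qed

lemma gen_bound: "h \<in> generate G (derived_set G (carrier G)) \<Longrightarrow>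
  h \<in> carrier G \<and> (\<exists>N\<ge>0. \<forall>X Y. ell (e h (X \<inter> Y)) \<le> N * (f X + f Y))"
proof (induction rule: generate.induct)
  case one
  then show ?case using ell_one e_one by (intro conjI exI[of _ 0]) auto
next
  case (incl h)
  then obtain a b where ab: "a \<in> carrier G" "b \<in> carrier G"
    "h = a \<otimes>\<^bsub>G\<^esub> b \<otimes>\<^bsub>G\<^esub> inv\<^bsub>G\<^esub> a \<otimes>\<^bsub>G\<^esub> inv\<^bsub>G\<^esub> b" by blast
  then show ?case using ell_comm[OF ab(1,2)] by (intro conjI exI[of _ 2]) auto
next
  case (inv h)
  then obtain a b where ab: "a \<in> carrier G" "b \<in> carrier G"
    "h = a \<otimes>\<^bsub>G\<^esub> b \<otimes>\<^bsub>G\<^esub> inv\<^bsub>G\<^esub> a \<otimes>\<^bsub>G\<^esub> inv\<^bsub>G\<^esub> b" by blast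
  have "inv\<^bsub>G\<^esub> h = b \<otimes>\<^bsub>G\<^esub> a \<otimes>\<^bsub>G\<^esub> inv\<^bsub>G\<^esub> b \<otimes>\<^bsub>G\<^esub> inv\<^bsub>G\<^esub> a"
    using ab by (simp add: G.inv_mult_group G.m_assoc)
  then show ?case using ell_comm[OF ab(2,1)] ab by (intro conjI exI[of _ 2]) auto
next
  case (eng h1 h2)
  then obtain N1 N2 where N: "N1 \<ge> 0" "N2 \<ge> 0"
    "\<And>X Y. ell (e h1 (X \<inter> Y)) \<le> N1 * (f X + f Y)"
    "\<And>X Y. ell (e h2 (X \<inter> Y)) \<le> N2 * (f X + f Y)" by blast
  show ?case
  proof (intro conjI exI[of _ "N1 + N2"] allI)
    show "h1 \<otimes>\<^bsub>G\<^esub> h2 \<in> carrier G" using eng by simp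
    show "0 \<le> N1 + N2" using N by simp
    fix X Y
    have "ell (e (h1 \<otimes>\<^bsub>G\<^esub> h2) (X \<inter> Y)) \<le> ell (e h1 (X \<inter> Y)) + ell (e h2 (X \<inter> Y))"
      using eng by (simp add: e_mult ell_mult e_carrier)
    also have "\<dots> \<le> N1 * (f X + f Y) + N2 * (f X + f Y)" using N(3,4) by (rule add_mono)
    finally show "ell (e (h1 \<otimes>\<^bsub>G\<^esub> h2) (X \<inter> Y)) \<le> (N1 + N2) * (f X + f Y)"
      by (simp add: algebra_simps)
  qed
qed

lemma f_inter: "\<exists>K\<ge>0. \<forall>X Y. f (X \<inter> Y) \<le> K * (f X + f Y)"
proof -
  have "\<forall>a\<in>carrier G. \<exists>N. N \<ge> 0 \<and> (\<forall>X Y. ell (e a (X \<inter> Y)) \<le> N * (f X + f Y))"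
    using gen_bound perf unfolding derived_def by blast
  then obtain N where N: "\<And>a. a \<in> carrier G \<Longrightarrow> N a \<ge> 0"
     "\<And>a X Y. a \<in> carrier G \<Longrightarrow> ell (e a (X \<inter> Y)) \<le> N a * (f X + f Y)"
    by metis
  show ?thesis
  proof (intro exI[of _ "\<Sum>a\<in>carrier G. N a"] conjI allI)
    show "0 \<le> (\<Sum>a\<in>carrier G. N a)" using N(1) by (simp add: sum_nonneg)
    fix X Y
    have "f (X \<inter> Y) \<le> (\<Sum>a\<in>carrier G. N a * (f X + f Y))"
      unfolding f_def[of "X \<inter> Y"] by (rule sum_mono) (rule N(2))
    thus "f (X \<inter> Y) \<le> (\<Sum>a\<in>carrier G. N a) * (f X + f Y)" by (simp add: sum_distrib_right)
  qed
qed


definition good where "good X \<longleftrightarrow> (\<exists>N. \<forall>Y\<subseteq>X. f Y \<le> N)"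

lemma good_subset: "good A \<Longrightarrow> B \<subseteq> A \<Longrightarrow> good B"
  unfolding good_def by (meson subset_trans)

lemma good_union: assumes "good A" "good B" shows "good (A \<union> B)"
proof -
  obtain N1 where N1: "\<forall>Y\<subseteq>A. f Y \<le> N1" using assms(1) unfolding good_def by blast
  obtain N2 where N2: "\<forall>Y\<subseteq>B. f Y \<le> N2" using assms(2) unfolding good_def by blast
  have H: "f Y \<le> N1 + N2" if "Y \<subseteq> A \<union> B" for Y
  proof -
    have eqY: "(Y \<inter> A) \<union> (Y - A) = Y" by blast
    have dj: "(Y \<inter> A) \<inter> (Y - A) = {}" by blast
    have "f ((Y \<inter> A) \<union> (Y - A)) \<le> f (Y \<inter> A) + f (Y - A)" by (rule f_union[OF dj])
    hence "f Y \<le> f (Y \<inter> A) + f (Y - A)" by (simp only: eqY)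
    also have "\<dots> \<le> N1 + N2"
    proof (rule add_mono)
      show "f (Y \<inter> A) \<le> N1" using N1 by blast
      have "Y - A \<subseteq> B" using that by blast
      then show "f (Y - A) \<le> N2" using N2 by blast
    qed
    finally show ?thesis .
  qed
  show ?thesis unfolding good_def
    by (rule exI[of _ "N1 + N2"]) (intro allI impI H)
qed

lemma card_pos: "real (card (carrier G)) > 0"
proof -
  have "carrier G \<noteq> {}" using G.one_closed by blast
  thus ?thesis using fin by (simp add: card_gt_0_iff)
qed

lemma step: assumes "\<not> good R"
  shows "\<exists>W R'. W \<subseteq> R \<and> R' \<subseteq> R - W \<and> real n \<le> f W \<and> \<not> good R'"
proof -
  define c where "c = real (card (carrier G))"
  have c: "c > 0" using card_pos by (simp add: c_def)
  have "\<not> (\<forall>Y\<subseteq>R. f Y \<le> f R + c * n)" using assms unfolding good_def by blast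
  then obtain Z where Z1: "Z \<subseteq> R" and Z2: "\<not> f Z \<le> f R + c * n" by blast
  have Z: "Z \<subseteq> R" "f Z > f R + c * n" using Z1 Z2 by auto
  show ?thesis
  proof (cases "good (R - Z)")
    case False
    have "card (carrier G) > 0" using card_pos by simp
    then have c1: "c \<ge> 1" unfolding c_def by simp
    have "real n \<le> c * real n" using c1 by (simp add: mult_le_cancel_right1)
    hence "real n \<le> f Z" using Z(2) f_nonneg[of R] by linarith
    moreover have "R - Z \<subseteq> R - Z" by blast
    ultimately show ?thesis using Z(1) False by blast
  next
    case True
    have "\<not> good Z"
    proof
      assume "good Z"
      hence "good (Z \<union> (R - Z))" using True by (rule good_union)
      moreover have "Z \<union> (R - Z) = R" using Z by blast
      ultimately show False using assms by simp
    qed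
    moreover have "f Z \<le> f R + c * f (R - Z)" using f_diff[OF Z(1)] by (simp add: c_def)
    hence "c * n < c * f (R - Z)" using Z by linarith
    hence "real n \<le> f (R - Z)" using c by simp
    moreover have "Z \<subseteq> R - (R - Z)" using Z by blast
    moreover have "R - Z \<subseteq> R" by blast
    ultimately show ?thesis by blast
  qed
qed

lemma good_univ: "good UNIV"
proof (rule ccontr)
  assume bad: "\<not> good UNIV"
  define Q where "Q n R p \<longleftrightarrow> fst p \<subseteq> R \<and> snd p \<subseteq> R - fst p \<and> real n \<le> f (fst p) \<and> \<not> good (snd p)"
    for n R and p :: "'i set \<times> 'i set"
  have ex: "\<exists>p. Q n R p" if "\<not> good R" for n R
  proof -
    from step[OF that, of n] obtain W R' where "W \<subseteq> R" "R' \<subseteq> R - W" "real n \<le> f W" "\<not> good R'"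
      by blast
    then have "Q n R (W, R')" unfolding Q_def by simp
    then show ?thesis ..
  qed
  define \<sigma> where "\<sigma> n R = (SOME p. Q n R p)" for n R
  have \<sigma>Q: "Q n R (\<sigma> n R)" if "\<not> good R" for n R
    unfolding \<sigma>_def using ex[OF that] by (rule someI_ex)
  have \<sigma>: "fst (\<sigma> n R) \<subseteq> R \<and> snd (\<sigma> n R) \<subseteq> R - fst (\<sigma> n R)
      \<and> real n \<le> f (fst (\<sigma> n R)) \<and> \<not> good (snd (\<sigma> n R))" if "\<not> good R" for n R
    using \<sigma>Q[OF that] unfolding Q_def .
  define Rs where "Rs = rec_nat UNIV (\<lambda>n R. snd (\<sigma> n R))"
  have Rs0: "Rs 0 = UNIV" and RsS: "\<And>n. Rs (Suc n) = snd (\<sigma> n (Rs n))" by (simp_all add: Rs_def)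
  have badR: "\<not> good (Rs n)" for n
  proof (induction n)
    case 0 show ?case using bad Rs0 by simp
  next
    case (Suc n) show ?case using \<sigma>[OF Suc.IH] RsS[of n] by simp
  qed
  define W where "W n = fst (\<sigma> n (Rs n))" for n
  have WR: "W n \<subseteq> Rs n" and RW: "Rs (Suc n) \<subseteq> Rs n - W n" and fW: "real n \<le> f (W n)" for n
    using \<sigma>[OF badR[of n]] by (auto simp: W_def RsS)
  have dec: "Rs (m + k) \<subseteq> Rs m" for m k
  proof (induction k)
    case (Suc k) then show ?case using RW[of "m + k"] by auto
  qed simp
  have disj0: "W m \<inter> W n = {}" if "m < n" for m n
  proof -
    obtain k where "n = Suc m + k" using \<open>m < n\<close> less_iff_Suc_add by auto
    hence "W n \<subseteq> Rs (Suc m)" using WR[of n] dec[of "Suc m" k] by auto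
    thus ?thesis using RW[of m] by blast
  qed
  have disj: "W m \<inter> W n = {}" if "m \<noteq> n" for m n
    using that disj0[of m n] disj0[of n m] by (cases "m < n") auto
  define B where "B j = (\<Union>n\<in>{n. fst (prod_decode n) = j}. W n)" for j
  have Bbad: "\<not> good (B j)" for j
  proof
    assume "good (B j)"
    then obtain N where N: "\<And>Y. Y \<subseteq> B j \<Longrightarrow> f Y \<le> N" unfolding good_def by blast
    define m where "m = Suc (nat \<lceil>N\<rceil>)"
    define n where "n = prod_encode (j, m)"
    have "W n \<subseteq> B j" unfolding B_def n_def by (intro UN_upper) simp
    hence "f (W n) \<le> N" by (rule N)
    moreover have "real m \<le> real n" unfolding n_def using le_prod_encode_2 by simp
    moreover have "N < real m" unfolding m_def by linarith
    ultimately show False using fW[of n] by linarith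
  qed
  have Bdisj: "B j \<inter> B j' = {}" if "j \<noteq> j'" for j j'
  proof (rule ccontr)
    assume "B j \<inter> B j' \<noteq> {}"
    then obtain i n n' where nn: "fst (prod_decode n) = j" "fst (prod_decode n') = j'" "i \<in> W n" "i \<in> W n'"
      unfolding B_def by blast
    hence "n \<noteq> n'" using that by auto
    then show False using disj[of n n'] nn by blast
  qed
  obtain K where K: "K \<ge> 0" "\<And>X Y. f (X \<inter> Y) \<le> K * (f X + f Y)" using f_inter by blast
  have "\<forall>j. \<exists>Z. Z \<subseteq> B j \<and> f Z > K * (f (B j) + real j)"
    using Bbad unfolding good_def by (meson not_le)
  then have "\<exists>Z. \<forall>j. Z j \<subseteq> B j \<and> f (Z j) > K * (f (B j) + real j)" by (rule choice)
  then obtain Z where Z0: "\<forall>j. Z j \<subseteq> B j \<and> f (Z j) > K * (f (B j) + real j)" by blast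
  have Z: "\<And>j. Z j \<subseteq> B j" "\<And>j. f (Z j) > K * (f (B j) + real j)" using Z0 by auto
  define ZZ where "ZZ = (\<Union>j. Z j)"
  have ZZB: "ZZ \<inter> B j = Z j" for j
  proof
    show "ZZ \<inter> B j \<subseteq> Z j"
    proof
      fix i assume "i \<in> ZZ \<inter> B j"
      then obtain j' where "i \<in> Z j'" "i \<in> B j" unfolding ZZ_def by blast
      moreover have "j' = j" using Bdisj[of j' j] Z(1)[of j'] calculation by blast
      ultimately show "i \<in> Z j" by simp
    qed
  qed (use Z(1) ZZ_def in blast)
  have lt: "real j < f ZZ" for j
  proof -
    have "K * (f (B j) + real j) < K * (f ZZ + f (B j))" using K(2)[of ZZ "B j"] Z(2)[of j] ZZB[of j] by simp
    hence "K * real j < K * f ZZ" by (simp add: algebra_simps)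
    thus ?thesis using K(1) by (simp add: mult_less_cancel_left)
  qed
  show False using lt[of "nat \<lceil>f ZZ\<rceil>"] by linarith
qed

lemma ell_bounded: "\<exists>B. \<forall>g\<in>carrier P. ell g \<le> B"
proof -
  obtain N where N: "\<And>Y. f Y \<le> N" using good_univ unfolding good_def by blast
  have dec: "ell (\<lambda>i\<in>I. if g i \<in> S then g i else \<one>\<^bsub>G\<^esub>) \<le> (\<Sum>a\<in>S. ell (e a {i. g i = a}))"
    if g: "g \<in> carrier P" and S: "finite S" "S \<subseteq> carrier G" for g S
    using S
  proof (induction S rule: finite_induct)
    case empty
    have "(\<lambda>i\<in>I. if g i \<in> {} then g i else \<one>\<^bsub>G\<^esub>) = \<one>\<^bsub>P\<^esub>" by (simp add: one_product_group)
    then show ?case using ell_one by simp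
  next
    case (insert a S)
    have gi: "i \<in> I \<Longrightarrow> g i \<in> carrier G" for i using g by (auto simp: carrier_product_group)
    have eq: "(\<lambda>i\<in>I. if g i \<in> insert a S then g i else \<one>\<^bsub>G\<^esub>) =
       e a {i. g i = a} \<otimes>\<^bsub>P\<^esub> (\<lambda>i\<in>I. if g i \<in> S then g i else \<one>\<^bsub>G\<^esub>)"
      unfolding e_def mult_product_group
    proof (rule restrict_ext)
      fix i assume i: "i \<in> I"
      have aG: "a \<in> carrier G" using insert.prems by simp
      show "(if g i \<in> insert a S then g i else \<one>\<^bsub>G\<^esub>) =
        (\<lambda>i\<in>I. if i \<in> {i. g i = a} then a else \<one>\<^bsub>G\<^esub>) i \<otimes>\<^bsub>G\<^esub> (\<lambda>i\<in>I. if g i \<in> S then g i else \<one>\<^bsub>G\<^esub>) i"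
      proof (cases "g i = a")
        case True then show ?thesis using i aG insert.hyps(2) by simp
      next
        case False then show ?thesis using i gi[OF i] by simp
      qed
    qed
    have c: "(\<lambda>i\<in>I. if g i \<in> S then g i else \<one>\<^bsub>G\<^esub>) \<in> carrier P"
      using gi by (auto simp: carrier_product_group)
    have "ell (\<lambda>i\<in>I. if g i \<in> insert a S then g i else \<one>\<^bsub>G\<^esub>) \<le>
      ell (e a {i. g i = a}) + ell (\<lambda>i\<in>I. if g i \<in> S then g i else \<one>\<^bsub>G\<^esub>)"
      unfolding eq using insert c by (intro ell_mult e_carrier) auto
    moreover have "ell (\<lambda>i\<in>I. if g i \<in> S then g i else \<one>\<^bsub>G\<^esub>) \<le> (\<Sum>a\<in>S. ell (e a {i. g i = a}))"
      by (rule insert.IH) (use insert.prems in simp)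
    ultimately show ?case using sum.insert[OF insert.hyps, of "\<lambda>a. ell (e a {i. g i = a})"] by linarith
  qed
  show ?thesis
  proof (intro exI[of _ "real (card (carrier G)) * N"] ballI)
    fix g assume g: "g \<in> carrier P"
    have "(\<lambda>i\<in>I. if g i \<in> carrier G then g i else \<one>\<^bsub>G\<^esub>) = g"
    proof (rule ext)
      fix i show "(\<lambda>i\<in>I. if g i \<in> carrier G then g i else \<one>\<^bsub>G\<^esub>) i = g i"
        using g by (cases "i \<in> I") (auto simp: carrier_product_group PiE_def extensional_def)
    qed
    hence "ell g \<le> (\<Sum>a\<in>carrier G. ell (e a {i. g i = a}))" using dec[OF g fin] by simp
    also have "\<dots> \<le> (\<Sum>a\<in>carrier G. N)" using ell_le_f N by (intro sum_mono) (meson order_trans)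
    finally show "ell g \<le> real (card (carrier G)) * N" by simp
  qed
qed

end

theorem mainTheorem1:
  fixes G :: "('a, 'b) monoid_scheme" and I :: "'i set"
  assumes "group G" and "finite (carrier G)" and "perfect_group G"
  shows "strongly_bounded TYPE('m) (product_group I (\<lambda>_. G))"
  unfolding strongly_bounded_def
proof (intro allI impI ballI)
  fix M :: "'m set" and d \<phi> x
  assume act: "isometric_action (product_group I (\<lambda>_. G)) M d \<phi>" and xM: "x \<in> M"
  have perf: "derived G (carrier G) = carrier G" using assms(3) by (simp add: perfect_group_def)
  interpret C: ctx G I M d \<phi> x by (rule ctx.intro[OF assms(1,2) perf act xM])
  have Met: "Metric_space M d" using act by (simp add: isometric_action_def)
  obtain B where B: "\<And>g. g \<in> carrier (product_group I (\<lambda>_. G)) \<Longrightarrow> C.ell g \<le> B"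
    using C.ell_bounded by blast
  have "(\<lambda>g. \<phi> g x) ` carrier (product_group I (\<lambda>_. G)) \<subseteq> Metric_space.mcball M d x B"
  proof
    fix y assume "y \<in> (\<lambda>g. \<phi> g x) ` carrier (product_group I (\<lambda>_. G))"
    then obtain g where g: "g \<in> carrier (product_group I (\<lambda>_. G))" "y = \<phi> g x" by blast
    have yM: "y \<in> M" using C.act_in[OF g(1) xM] g(2) by simp
    have "d x y = C.ell g" unfolding C.ell_def g(2) by (rule Metric_space.commute[OF Met])
    then have "d x y \<le> B" using B[OF g(1)] by simp
    then show "y \<in> Metric_space.mcball M d x B"
      using yM xM by (simp add: Metric_space.in_mcball[OF Met])
  qed
  then show "Metric_space.mbounded M d ((\<lambda>g. \<phi> g x) ` carrier (product_group I (\<lambda>_. G)))"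
    unfolding Metric_space.mbounded_def[OF Met] by blast
qed
end
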